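(* Let $k\ge1$, $j\ge0$, $n=k+j$ and $N\in\mathcal{OC}_{k,j}$. Then $$\sum_{e\in \mathrm{ToT}(N)}A_C(N(e))=(2n+3)A_C(N)+(2n-1).$$
   Context: A (planted, binary) phylogenetic network on a taxon set $X$ with $|X|=n$ is a finite acyclic directed graph with: - a unique root $\rho$ of indegree 0 and outdegree 1; - exactly $n$ nodes of indegree 1 and outdegree 0 (leaves), labeled bijectively by $X$; - every other node is either a tree node (indegree 1, outdegree 2) or a reticulation node (indegree 2, outdegree 1). An edge $(p,q)$ is a tree edge if $q$ is a tree node or a leaf. A network is simplex if the child of every reticulation node is a leaf. A node $u$ is an ancestor of a node $v\neq u$ if some directed path from $\rho$ to $v$ passes through $u$. The ancestor number $\alpha_N(v)$ is the number of ancestors of $v$. The top tree component $C(N)$ of a simplex network $N$ is the set of tree nodes and leaves not descending from any reticulation node. Define $A_C(N)=\sum_{v\in C(N)}\alpha_N(v)$. $\mathrm{ToT}(N)$ is the set of tree edges $(u,v)$ of $N$ with $u$ not a reticulation node, i.e. the tree edges of the top tree component. For $k\ge1$, $j\ge0$, $\mathcal{OC}_{k,j}$ is the set of simplex networks on taxa $\{1,\dots,k+j\}$ with exactly $j$ reticulation nodes, whose children are the leaves $k+1,\dots,k+j$. For $N\in\mathcal{OC}_{k,j}$ and $e=(u,v)\in\mathrm{ToT}(N)$, the network $N(e)$ is obtained from $N$ as follows: - subdivide $e$ into the path $(u,p),(p,q),(q,v)$ with new nodes $p,q$; - add a new reticulation node $r$ with edges $(p,r),(q,r)$; - add a new leaf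 labeled $n+1$ with edge $(r,n+1)$. *)

theory Defs
  imports Main
begin

record 'v network =
  nodes :: "'v set"
  edges :: "('v \<times> 'v) set"
  root :: 'v
  label :: "'v \<Rightarrow> nat"

definition indeg :: "'v network \<Rightarrow> 'v \<Rightarrow> nat" where
  "indeg N v = card {u. (u, v) \<in> edges N}"

definition outdeg :: "'v network \<Rightarrow> 'v \<Rightarrow> nat" where
  "outdeg N v = card {w. (v, w) \<in> edges N}"

definition is_leaf :: "'v network \<Rightarrow> 'v \<Rightarrow> bool" where
  "is_leaf N v \<longleftrightarrow> v \<in> nodes N \<and> indeg N v = 1 \<and> outdeg N v = 0"

definition is_tree_node :: "'v network \<Rightarrow> 'v \<Rightarrow> bool" where
  "is_tree_node N v \<longleftrightarrow> v \<in> nodes N \<and> indeg N v = 1 \<and> outdeg N v = 2"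

definition is_ret :: "'v network \<Rightarrow> 'v \<Rightarrow> bool" where
  "is_ret N v \<longleftrightarrow> v \<in> nodes N \<and> indeg N v = 2 \<and> outdeg N v = 1"

definition leaves :: "'v network \<Rightarrow> 'v set" where
  "leaves N = {v. is_leaf N v}"

definition rets :: "'v network \<Rightarrow> 'v set" where
  "rets N = {v. is_ret N v}"

definition is_network :: "'v network \<Rightarrow> nat \<Rightarrow> bool" where
  "is_network N n \<longleftrightarrow>
     finite (nodes N) \<and> edges N \<subseteq> nodes N \<times> nodes N \<and>
     (\<forall>x. (x, x) \<notin> (edges N)\<^sup>+) \<and>
     root N \<in> nodes N \<and> indeg N (root N) = 0 \<and> outdeg N (root N) = 1 \<and>
     bij_betw (label N) (leaves N) {1..n} \<and>
     (\<forall>v \<in> nodes N. v \<noteq> root N \<longrightarrow> is_leaf N v \<or> is_tree_node N v \<or> is_ret N v)"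

definition simplex :: "'v network \<Rightarrow> bool" where
  "simplex N \<longleftrightarrow> (\<forall>r c. is_ret N r \<and> (r, c) \<in> edges N \<longrightarrow> is_leaf N c)"

definition OC :: "nat \<Rightarrow> nat \<Rightarrow> 'v network set" where
  "OC k j = {N. is_network N (k + j) \<and> simplex N \<and> card (rets N) = j \<and>
     label N ` {c. \<exists>r. is_ret N r \<and> (r, c) \<in> edges N} = {k+1..k+j}}"

definition ancestors :: "'v network \<Rightarrow> 'v \<Rightarrow> 'v set" where
  "ancestors N v = {u. u \<noteq> v \<and> (root N, u) \<in> (edges N)\<^sup>* \<and> (u, v) \<in> (edges N)\<^sup>*}"

definition alpha :: "'v network \<Rightarrow> 'v \<Rightarrow> nat" where
  "alpha N v = card (ancestors N v)"

definition top_comp :: "'v network \<Rightarrow> 'v set" where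
  "top_comp N = {v. (is_tree_node N v \<or> is_leaf N v) \<and>
                    (\<forall>r. is_ret N r \<longrightarrow> r \<notin> ancestors N v)}"

definition A_C :: "'v network \<Rightarrow> nat" where
  "A_C N = (\<Sum>v \<in> top_comp N. alpha N v)"

definition ToT :: "'v network \<Rightarrow> ('v \<times> 'v) set" where
  "ToT N = {(u, v) \<in> edges N. (is_tree_node N v \<or> is_leaf N v) \<and> \<not> is_ret N u}"

text \<open>The network \<open>N(e)\<close> for a network on \<open>n\<close> taxa; new nodes are
 \<open>p = Inr 0\<close>, \<open>q = Inr 1\<close>, \<open>r = Inr 2\<close> and the new leaf \<open>Inr 3\<close> labelled \<open>n+1\<close>.\<close>
definition add_ret :: "'v network \<Rightarrow> nat \<Rightarrow> 'v \<times> 'v \<Rightarrow> ('v + nat) network" where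
  "add_ret N n e =
    (let u = fst e; v = snd e in
     \<lparr> nodes = Inl ` nodes N \<union> {Inr 0, Inr 1, Inr 2, Inr 3},
       edges = map_prod Inl Inl ` (edges N - {(u, v)}) \<union>
               {(Inl u, Inr 0), (Inr 0, Inr 1), (Inr 1, Inl v),
                (Inr 0, Inr 2), (Inr 1, Inr 2), (Inr 2, Inr 3)},
       root = Inl (root N),
       label = (\<lambda>x. case x of Inl w \<Rightarrow> label N w | Inr m \<Rightarrow> (if m = 3 then n + 1 else 0)) \<rparr>)"

end

theory Submission
  imports Defs
begin

locale onet =
  fixes N :: "'v network" and n :: nat
  assumes isnet: "is_network N n" and smp: "simplex N"
begin

abbreviation "E \<equiv> edges N"
abbreviation "V \<equiv> nodes N"
abbreviation "R \<equiv> root N"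

lemma finV: "finite V" using isnet by (simp add: is_network_def)
lemma Esub: "E \<subseteq> V \<times> V" using isnet by (simp add: is_network_def)
lemma acyc: "(x,x) \<notin> E\<^sup>+" using isnet by (simp add: is_network_def)
lemma rootV: "R \<in> V" using isnet by (simp add: is_network_def)
lemma root_in0: "indeg N R = 0" using isnet by (simp add: is_network_def)
lemma root_out1: "outdeg N R = 1" using isnet by (simp add: is_network_def)
lemma classify: "x \<in> V \<Longrightarrow> x \<noteq> R \<Longrightarrow> is_leaf N x \<or> is_tree_node N x \<or> is_ret N x"
  using isnet by (simp add: is_network_def)
lemma finE: "finite E" using finV Esub by (meson finite_SigmaI finite_subset)
lemma fin_out: "finite {w. (x,w) \<in> E}"
  by (rule finite_subset[OF _ finV]) (use Esub in blast)
lemma fin_in: "finite {w. (w,x) \<in> E}"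
  by (rule finite_subset[OF _ finV]) (use Esub in blast)
lemma out0: "outdeg N x = 0 \<Longrightarrow> (x,y) \<notin> E"
  using fin_out[of x] by (auto simp: outdeg_def)
lemma in0: "indeg N x = 0 \<Longrightarrow> (y,x) \<notin> E"
  using fin_in[of x] by (auto simp: indeg_def)
lemma root_noin: "(y,R) \<notin> E" using in0 root_in0 by blast
lemma leaf_noout: "is_leaf N x \<Longrightarrow> (x,y) \<notin> E"
  using out0 by (auto simp: is_leaf_def)
lemma uparent: assumes "indeg N x = 1" "(a,x) \<in> E" "(b,x) \<in> E" shows "a = b"
proof -
  obtain c where "{u. (u,x) \<in> E} = {c}" using assms(1) unfolding indeg_def by (rule card_1_singletonE)
  then show ?thesis using assms by (metis (no_types, lifting) mem_Collect_eq singletonD)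
qed
lemma uchild: assumes "outdeg N x = 1" "(x,a) \<in> E" "(x,b) \<in> E" shows "a = b"
proof -
  obtain c where "{u. (x,u) \<in> E} = {c}" using assms(1) unfolding outdeg_def by (rule card_1_singletonE)
  then show ?thesis using assms by (metis (no_types, lifting) mem_Collect_eq singletonD)
qed
lemma has_parent2: "indeg N x \<noteq> 0 \<Longrightarrow> \<exists>a. (a,x) \<in> E"
  unfolding indeg_def by (metis (mono_tags, lifting) Collect_empty_eq card.empty)
lemma has_parent: "indeg N x = 1 \<Longrightarrow> \<exists>a. (a,x) \<in> E"
  using has_parent2 by simp
lemma has_child2: "outdeg N x \<noteq> 0 \<Longrightarrow> \<exists>a. (x,a) \<in> E"
  unfolding outdeg_def by (metis (mono_tags, lifting) Collect_empty_eq card.empty)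

lemma wfE: "wf E"
  using finE acyc by (simp add: wf_iff_acyclic_if_finite acyclic_def)

lemma reach: "x \<in> V \<Longrightarrow> (R, x) \<in> E\<^sup>*"
proof (induction x rule: wf_induct_rule[OF wfE])
  case (1 x)
  show ?case
  proof (cases "x = R")
    case False
    then have "indeg N x \<noteq> 0" using classify[OF 1(2)]
      by (auto simp: is_leaf_def is_tree_node_def is_ret_def)
    then obtain a where a: "(a,x) \<in> E" using has_parent2 by blast
    then have "a \<in> V" using Esub by auto
    then have "(R,a) \<in> E\<^sup>*" using 1 a by blast
    then show ?thesis using a by auto
  qed simp
qed

lemma rtr_V: "(a, x) \<in> E\<^sup>* \<Longrightarrow> a \<in> V \<Longrightarrow> x \<in> V"
  by (induction rule: rtrancl_induct) (use Esub in auto)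
lemma reachV: "(R, x) \<in> E\<^sup>* \<Longrightarrow> x \<in> V" using rtr_V rootV by blast

lemma ret_desc: assumes "is_ret N r" "(r,x) \<in> E\<^sup>+" shows "(r,x) \<in> E \<and> is_leaf N x"
  using assms(2,1) proof (induction x rule: trancl_induct)
  case (base y)
  then show ?case using smp by (auto simp: simplex_def)
next
  case (step y z)
  then show ?case using leaf_noout by blast
qed

lemma excl: "is_leaf N x \<Longrightarrow> \<not> is_tree_node N x \<and> \<not> is_ret N x"
  "is_tree_node N x \<Longrightarrow> \<not> is_ret N x"
  by (auto simp: is_leaf_def is_tree_node_def is_ret_def)

lemma notR: "is_leaf N x \<or> is_tree_node N x \<or> is_ret N x \<Longrightarrow> x \<noteq> R"
  using root_in0 by (auto simp: is_leaf_def is_tree_node_def is_ret_def)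


abbreviation "T \<equiv> top_comp N"
abbreviation "Tr \<equiv> {x. is_tree_node N x}"
abbreviation "Lv \<equiv> leaves N"
abbreviation "Rt \<equiv> rets N"
abbreviation "C \<equiv> {c. \<exists>r. is_ret N r \<and> (r,c) \<in> E}"

lemma anc_iff: "a \<in> ancestors N w \<longleftrightarrow> a \<noteq> w \<and> (R,a) \<in> E\<^sup>* \<and> (a,w) \<in> E\<^sup>*"
  by (simp add: ancestors_def)

lemma anc_V: "ancestors N w \<subseteq> V" using reachV by (auto simp: anc_iff)
lemma fin_anc: "finite (ancestors N w)" using anc_V finV finite_subset by blast

lemma T_sub: "T \<subseteq> V" by (auto simp: top_comp_def is_tree_node_def is_leaf_def)
lemma finT: "finite T" using T_sub finV finite_subset by blast

lemma anc_trancl: "a \<in> ancestors N w \<Longrightarrow> (a,w) \<in> E\<^sup>+"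
  by (auto simp: anc_iff rtrancl_eq_or_trancl)

lemma T_char: "x \<in> T \<longleftrightarrow> x \<in> Tr \<or> (x \<in> Lv \<and> x \<notin> C)"
proof
  assume x: "x \<in> T"
  show "x \<in> Tr \<or> (x \<in> Lv \<and> x \<notin> C)"
  proof (cases "is_tree_node N x")
    case False
    then have l: "is_leaf N x" using x by (auto simp: top_comp_def)
    have "x \<notin> C"
    proof
      assume "x \<in> C"
      then obtain r where r: "is_ret N r" "(r,x) \<in> E" by blast
      have "r \<noteq> x" using r l excl by blast
      moreover have "(R,r) \<in> E\<^sup>*" using r reach by (auto simp: is_ret_def)
      ultimately have "r \<in> ancestors N x" using r by (auto simp: anc_iff)
      then show False using x r by (auto simp: top_comp_def)
    qed
    then show ?thesis using l by (auto simp: leaves_def)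
  qed simp
next
  assume x: "x \<in> Tr \<or> (x \<in> Lv \<and> x \<notin> C)"
  have "\<not> (is_ret N r \<and> r \<in> ancestors N x)" for r
  proof
    assume r: "is_ret N r \<and> r \<in> ancestors N x"
    then have "(r,x) \<in> E \<and> is_leaf N x" using ret_desc anc_trancl by blast
    then show False using x r excl by (auto simp: leaves_def)
  qed
  then show "x \<in> T" using x by (auto simp: top_comp_def leaves_def)
qed

lemma ToT_T: assumes "(u,w) \<in> ToT N" shows "w \<in> T"
proof -
  have e: "(u,w) \<in> E" "is_tree_node N w \<or> is_leaf N w" "\<not> is_ret N u"
    using assms by (auto simp: ToT_def)
  have "\<not> (is_ret N r \<and> r \<in> ancestors N w)" for r
  proof
    assume r: "is_ret N r \<and> r \<in> ancestors N w"
    then have "(r,w) \<in> E" using ret_desc anc_trancl by blast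
    moreover have "indeg N w = 1" using e by (auto simp: is_tree_node_def is_leaf_def)
    ultimately have "r = u" using e uparent by blast
    then show False using r e by blast
  qed
  then show ?thesis using e by (auto simp: top_comp_def)
qed

lemma T_parent: assumes "w \<in> T" obtains u where "(u,w) \<in> ToT N"
proof -
  have w: "is_tree_node N w \<or> is_leaf N w" using assms by (auto simp: top_comp_def)
  then have "indeg N w = 1" by (auto simp: is_tree_node_def is_leaf_def)
  then obtain u where u: "(u,w) \<in> E" using has_parent by blast
  have "w \<noteq> u" using u acyc by blast
  moreover have "(R,u) \<in> E\<^sup>*" using u Esub reach by blast
  ultimately have "u \<in> ancestors N w" using u by (auto simp: anc_iff)
  then have "\<not> is_ret N u" using assms by (auto simp: top_comp_def)
  then show ?thesis using that u w by (auto simp: ToT_def)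
qed

lemma bij_ToT: "bij_betw snd (ToT N) T"
proof (rule bij_betwI')
  fix x y assume "x \<in> ToT N" "y \<in> ToT N"
  then show "(snd x = snd y) = (x = y)"
    using uparent by (cases x; cases y) (auto simp: ToT_def is_tree_node_def is_leaf_def)
next
  fix x assume "x \<in> ToT N" then show "snd x \<in> T" using ToT_T by (cases x) auto
next
  fix w assume "w \<in> T" then show "\<exists>x\<in>ToT N. w = snd x" using T_parent by (metis snd_conv)
qed

lemma R_anc: assumes "w \<in> T" shows "R \<in> ancestors N w"
proof -
  have "w \<noteq> R" using assms notR by (auto simp: top_comp_def)
  moreover have "(R,w) \<in> E\<^sup>*" using assms T_sub reach by blast
  ultimately show ?thesis by (auto simp: anc_iff)
qed

lemma T_below: assumes "w \<in> T" shows "{a \<in> T. (a,w) \<in> E\<^sup>*} = insert w (ancestors N w - {R})"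
proof (rule set_eqI, rule iffI)
  fix a assume a: "a \<in> {a \<in> T. (a,w) \<in> E\<^sup>*}"
  have "a \<noteq> R" using a notR by (auto simp: top_comp_def)
  moreover have "(R,a) \<in> E\<^sup>*" using a T_sub reach by blast
  ultimately show "a \<in> insert w (ancestors N w - {R})" using a by (auto simp: anc_iff)
next
  fix a assume a: "a \<in> insert w (ancestors N w - {R})"
  show "a \<in> {a \<in> T. (a,w) \<in> E\<^sup>*}"
  proof (cases "a = w")
    case False
    then have a2: "a \<in> ancestors N w" "a \<noteq> R" using a by auto
    then have aV: "a \<in> V" using anc_V by blast
    have "(a,w) \<in> E\<^sup>+" using a2 anc_trancl by blast
    then obtain z where "(a,z) \<in> E" by (meson tranclD)
    then have nl: "\<not> is_leaf N a" using leaf_noout by blast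
    have nr: "\<not> is_ret N a" using a2 assms by (auto simp: top_comp_def)
    have "is_tree_node N a" using classify[OF aV a2(2)] nl nr by blast
    then have "a \<in> T" using T_char by blast
    then show ?thesis using a2 by (auto simp: anc_iff)
  qed (use assms in auto)
qed

lemma card_below: assumes "w \<in> T" shows "card {a \<in> T. (a,w) \<in> E\<^sup>*} = alpha N w"
proof -
  have "w \<notin> ancestors N w" by (simp add: anc_iff)
  then have "card (insert w (ancestors N w - {R})) = Suc (card (ancestors N w) - 1)"
    using fin_anc R_anc[OF assms] by (simp add: card_Diff_singleton)
  moreover have "card (ancestors N w) \<ge> 1" using fin_anc R_anc[OF assms]
    by (metis One_nat_def Suc_leI card_gt_0_iff empty_iff)
  ultimately show ?thesis using T_below[OF assms] by (simp add: alpha_def)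
qed

lemma sum_desc: "(\<Sum>v\<in>T. card {w \<in> T. (v,w) \<in> E\<^sup>*}) = A_C N"
proof -
  have "(\<Sum>v\<in>T. card {w \<in> T. (v,w) \<in> E\<^sup>*}) = (\<Sum>v\<in>T. \<Sum>w\<in>T. if (v,w) \<in> E\<^sup>* then 1 else 0)"
    using finT by (simp add: sum.inter_filter[symmetric])
  also have "\<dots> = (\<Sum>w\<in>T. \<Sum>v\<in>T. if (v,w) \<in> E\<^sup>* then 1 else 0)"
    by (rule sum.swap)
  also have "\<dots> = (\<Sum>w\<in>T. card {v \<in> T. (v,w) \<in> E\<^sup>*})"
    using finT by (simp add: sum.inter_filter[symmetric])
  also have "\<dots> = (\<Sum>w\<in>T. alpha N w)" using card_below by simp
  finally show ?thesis by (simp add: A_C_def)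
qed


lemma V_part: "V = insert R (Lv \<union> Tr \<union> Rt)"
  using classify rootV by (auto simp: leaves_def rets_def is_leaf_def is_tree_node_def is_ret_def)

lemma finLv: "finite Lv" by (rule finite_subset[OF _ finV]) (auto simp: leaves_def is_leaf_def)
lemma finTr: "finite Tr" by (rule finite_subset[OF _ finV]) (auto simp: is_tree_node_def)
lemma finRt: "finite Rt" by (rule finite_subset[OF _ finV]) (auto simp: rets_def is_ret_def)

lemma sum_part:
  fixes f :: "'v \<Rightarrow> nat"
  shows "(\<Sum>x\<in>V. f x) = f R + (\<Sum>x\<in>Lv. f x) + (\<Sum>x\<in>Tr. f x) + (\<Sum>x\<in>Rt. f x)"
proof -
  have d1: "Lv \<inter> Tr = {}" "(Lv \<union> Tr) \<inter> Rt = {}"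
    using excl by (auto simp: leaves_def rets_def)
  have nR: "R \<notin> Lv \<union> Tr \<union> Rt" using notR by (auto simp: leaves_def rets_def)
  show ?thesis unfolding V_part
    using finLv finTr finRt d1 nR by (simp add: sum.union_disjoint)
qed

lemma card_E_out: "card E = (\<Sum>x\<in>V. outdeg N x)"
proof -
  have eq: "E = (SIGMA x:V. {w. (x,w) \<in> E})" using Esub by auto
  have "card (SIGMA x:V. {w. (x,w) \<in> E}) = (\<Sum>x\<in>V. card {w. (x,w) \<in> E})"
    using finV fin_out by simp
  then show ?thesis unfolding outdeg_def using eq by metis
qed

lemma card_E_in: "card E = (\<Sum>x\<in>V. indeg N x)"
proof -
  have eq: "E\<inverse> = (SIGMA x:V. {w. (w,x) \<in> E})" using Esub by auto
  have "card (SIGMA x:V. {w. (w,x) \<in> E}) = (\<Sum>x\<in>V. card {w. (w,x) \<in> E})"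
    using finV fin_in by simp
  then have "card (E\<inverse>) = (\<Sum>x\<in>V. indeg N x)" unfolding indeg_def using eq by metis
  then show ?thesis by simp
qed

lemma handshake: "card Lv + card Tr + 2 * card Rt = 1 + 2 * card Tr + card Rt"
proof -
  have "(\<Sum>x\<in>V. indeg N x) = (\<Sum>x\<in>V. outdeg N x)" using card_E_in card_E_out by simp
  moreover have "(\<Sum>x\<in>Lv. indeg N x) = card Lv" "(\<Sum>x\<in>Tr. indeg N x) = card Tr"
    "(\<Sum>x\<in>Rt. indeg N x) = 2 * card Rt"
    "(\<Sum>x\<in>Lv. outdeg N x) = 0" "(\<Sum>x\<in>Tr. outdeg N x) = 2 * card Tr"
    "(\<Sum>x\<in>Rt. outdeg N x) = card Rt"
    by (simp_all add: leaves_def rets_def is_leaf_def is_tree_node_def is_ret_def)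
  ultimately show ?thesis unfolding sum_part using root_in0 root_out1 by simp
qed

lemma card_Lv: "card Lv = n"
proof -
  have "bij_betw (label N) Lv {1..n}" using isnet by (simp add: is_network_def)
  then have "card Lv = card {1..n}" by (rule bij_betw_same_card)
  then show ?thesis by simp
qed

definition ch :: "'v \<Rightarrow> 'v" where "ch r = (THE c. (r,c) \<in> E)"

lemma ch: assumes "is_ret N r" shows "(r, ch r) \<in> E" "(r,c) \<in> E \<Longrightarrow> c = ch r"
proof -
  have o: "outdeg N r = 1" using assms by (simp add: is_ret_def)
  obtain c0 where "(r,c0) \<in> E" using has_child2 o by fastforce
  then have "\<exists>!c. (r,c) \<in> E" using uchild[OF o] by blast
  then show "(r, ch r) \<in> E" unfolding ch_def by (rule theI')
  then show "(r,c) \<in> E \<Longrightarrow> c = ch r" using uchild[OF o] by blast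
qed

lemma card_C: "card C = card Rt"
proof -
  have "C = ch ` Rt" using ch by (auto simp: rets_def)
  moreover have "inj_on ch Rt"
  proof (rule inj_onI)
    fix a b assume ab: "a \<in> Rt" "b \<in> Rt" "ch a = ch b"
    have ra: "is_ret N a" "is_ret N b" using ab by (auto simp: rets_def)
    have e: "(a, ch a) \<in> E" "(b, ch a) \<in> E" using ch(1)[OF ra(1)] ch(1)[OF ra(2)] ab(3) by auto
    have "is_leaf N (ch a)" using e ra smp by (auto simp: simplex_def)
    then have "indeg N (ch a) = 1" by (simp add: is_leaf_def)
    then show "a = b" using uparent e by blast
  qed
  ultimately show ?thesis by (simp add: card_image)
qed

lemma C_Lv: "C \<subseteq> Lv" using smp by (auto simp: simplex_def leaves_def)

lemma card_T: "card T = 2 * n - 1"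
proof -
  have "T = Tr \<union> (Lv - C)" using T_char by blast
  moreover have "Tr \<inter> (Lv - C) = {}" using excl by (auto simp: leaves_def)
  ultimately have "card T = card Tr + card (Lv - C)"
    using finTr finLv by (simp add: card_Un_disjoint)
  moreover have "card (Lv - C) + card C = card Lv"
  proof -
    have f: "finite C" using C_Lv finLv finite_subset by blast
    have "card (Lv - C) = card Lv - card C" using card_Diff_subset[OF f C_Lv] .
    moreover have "card C \<le> card Lv" using card_mono[OF finLv C_Lv] .
    ultimately show ?thesis by simp
  qed
  ultimately show ?thesis using handshake card_Lv card_C by simp
qed

end

locale oedge = onet N n for N :: "'v network" and n +
  fixes u v assumes uv: "(u,v) \<in> ToT N"
begin

abbreviation "N' \<equiv> add_ret N n (u,v)"
abbreviation "E' \<equiv> edges N'"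

lemma uvE: "(u,v) \<in> E" and nru: "\<not> is_ret N u" and vtl: "is_tree_node N v \<or> is_leaf N v"
  using uv by (auto simp: ToT_def)
lemma vT: "v \<in> T" using uv ToT_T by blast
lemma uV: "u \<in> V" and vV: "v \<in> V" using uvE Esub by auto
lemma indv: "indeg N v = 1" using vtl by (auto simp: is_tree_node_def is_leaf_def)
lemma vu_not: "(v,u) \<notin> E\<^sup>*"
proof
  assume "(v,u) \<in> E\<^sup>*" then have "(v,v) \<in> E\<^sup>+" using uvE by simp
  then show False using acyc by blast
qed
lemma u_ne_v: "u \<noteq> v" using vu_not by auto

lemma E'_LL[simp]: "(Inl a, Inl b) \<in> E' \<longleftrightarrow> (a,b) \<in> E \<and> (a,b) \<noteq> (u,v)"
  by (auto simp: add_ret_def)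
lemma E'_LR[simp]: "(Inl a, Inr m) \<in> E' \<longleftrightarrow> a = u \<and> m = 0"
  by (auto simp: add_ret_def)
lemma E'_RL[simp]: "(Inr m, Inl b) \<in> E' \<longleftrightarrow> m = 1 \<and> b = v"
  by (auto simp: add_ret_def)
lemma E'_RR[simp]: "(Inr m, Inr m') \<in> E' \<longleftrightarrow> (m = 0 \<and> m' = 1) \<or> (m = 0 \<and> m' = 2) \<or> (m = 1 \<and> m' = 2) \<or> (m = 2 \<and> m' = 3)"
  by (auto simp: add_ret_def)
lemma nodes'_L[simp]: "Inl a \<in> nodes N' \<longleftrightarrow> a \<in> V" by (auto simp: add_ret_def)
lemma nodes'_R[simp]: "Inr m \<in> nodes N' \<longleftrightarrow> m \<le> 3" by (auto simp: add_ret_def)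
lemma root'[simp]: "root N' = Inl R" by (simp add: add_ret_def)

definition fm :: "'v + nat \<Rightarrow> 'v" where "fm x = (case x of Inl a \<Rightarrow> a | Inr _ \<Rightarrow> u)"
definition gm :: "'v + nat \<Rightarrow> 'v" where "gm x = (case x of Inl a \<Rightarrow> a | Inr _ \<Rightarrow> v)"

lemma fm_step: "(x,y) \<in> E' \<Longrightarrow> (fm x, fm y) \<in> E\<^sup>*"
  using uvE by (cases x; cases y) (auto simp: fm_def)
lemma gm_step: "(x,y) \<in> E' \<Longrightarrow> (gm x, gm y) \<in> E\<^sup>*"
  using uvE by (cases x; cases y) (auto simp: gm_def)
lemma fm_rt: "(x,y) \<in> E'\<^sup>* \<Longrightarrow> (fm x, fm y) \<in> E\<^sup>*"
  by (induction rule: rtrancl_induct) (auto dest: fm_step)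
lemma gm_rt: "(x,y) \<in> E'\<^sup>* \<Longrightarrow> (gm x, gm y) \<in> E\<^sup>*"
  by (induction rule: rtrancl_induct) (auto dest: gm_step)

lemma lift_step: "(a,b) \<in> E \<Longrightarrow> (Inl a, Inl b) \<in> E'\<^sup>*"
proof (cases "(a,b) = (u,v)")
  case True
  have "(Inl u, Inr 0) \<in> E'" "(Inr 0, Inr 1) \<in> E'" "(Inr 1, Inl v) \<in> E'" by simp_all
  then have "(Inl u, Inl v) \<in> E'\<^sup>*" by (meson rtrancl.simps)
  then show ?thesis using True by simp
qed auto
lemma lift: "(a,b) \<in> E\<^sup>* \<Longrightarrow> (Inl a, Inl b) \<in> E'\<^sup>*"
  by (induction rule: rtrancl_induct) (auto dest: lift_step)

lemma closed: assumes "(x,y) \<in> E'\<^sup>*" "x \<in> S" "\<And>a b. a \<in> S \<Longrightarrow> (a,b) \<in> E' \<Longrightarrow> b \<in> S"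
  shows "y \<in> S"
  using assms(1,2) by (induction rule: rtrancl_induct) (auto intro: assms(3))

lemma high: assumes "(Inr m, y) \<in> E'\<^sup>*" "m \<ge> 2" shows "\<exists>m'. y = Inr m' \<and> m' \<ge> 2"
proof -
  have "y \<in> {z. \<exists>m'. z = Inr m' \<and> m' \<ge> 2}"
  proof (rule closed[OF assms(1)])
    fix a b assume "a \<in> {z. \<exists>m'. z = Inr m' \<and> m' \<ge> 2}" "(a,b) \<in> E'"
    then show "b \<in> {z. \<exists>m'. z = Inr m' \<and> m' \<ge> 2}" by (cases b) auto
  qed (use assms in auto)
  then show ?thesis by blast
qed

lemma no_back: assumes "(Inr 1, y) \<in> E'\<^sup>*" shows "y \<noteq> Inr 0"
proof -
  let ?S = "{Inr 1, Inr 2, Inr 3} \<union> Inl ` {b. (v,b) \<in> E\<^sup>*}"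
  have "y \<in> ?S"
  proof (rule closed[OF assms])
    fix a b assume a: "a \<in> ?S" "(a,b) \<in> E'"
    show "b \<in> ?S"
    proof (cases a)
      case (Inl a')
      then have va: "(v,a') \<in> E\<^sup>*" using a by auto
      show ?thesis
      proof (cases b)
        case (Inl b')
        then show ?thesis using a Inl \<open>a = Inl a'\<close> va by (auto intro: rtrancl_into_rtrancl)
      next
        case (Inr m)
        then have "a' = u" using a Inl by auto
        then show ?thesis using va vu_not by simp
      qed
    next
      case (Inr m)
      then show ?thesis using a by (cases b) auto
    qed
  qed simp
  then show ?thesis by auto
qed

lemma reach': "(Inl R, Inl a) \<in> E'\<^sup>* \<longleftrightarrow> (R,a) \<in> E\<^sup>*"
  using lift fm_rt[of "Inl R" "Inl a"] by (auto simp: fm_def)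
lemma reachLL: "(Inl a, Inl b) \<in> E'\<^sup>* \<longleftrightarrow> (a,b) \<in> E\<^sup>*"
  using lift fm_rt[of "Inl a" "Inl b"] by (auto simp: fm_def)
lemma reach0: "(Inl R, Inr 0) \<in> E'\<^sup>*"
proof -
  have "(Inl R, Inl u) \<in> E'\<^sup>*" using lift reach uV by blast
  then show ?thesis by (simp add: rtrancl.rtrancl_into_rtrancl)
qed
lemma reach1: "(Inl R, Inr 1) \<in> E'\<^sup>*"
  using reach0 by (simp add: rtrancl.rtrancl_into_rtrancl)
lemma R01: "m \<le> 1 \<Longrightarrow> (Inr m, Inl w) \<in> E'\<^sup>* \<longleftrightarrow> (v,w) \<in> E\<^sup>*"
proof
  assume "m \<le> 1" "(Inr m, Inl w) \<in> E'\<^sup>*"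
  then show "(v,w) \<in> E\<^sup>*" using gm_rt by (fastforce simp: gm_def)
next
  assume m: "m \<le> 1" and "(v,w) \<in> E\<^sup>*"
  then have "(Inl v, Inl w) \<in> E'\<^sup>*" using lift by blast
  moreover have "(Inr 1, Inl v) \<in> E'\<^sup>*" by (simp add: r_into_rtrancl)
  moreover have "(Inr 0, Inr 1) \<in> E'\<^sup>*" by (simp add: r_into_rtrancl)
  ultimately show "(Inr m, Inl w) \<in> E'\<^sup>*" using m
    by (cases m) (auto intro: rtrancl_trans)
qed
lemma L01: "m \<le> 1 \<Longrightarrow> (Inl a, Inr m) \<in> E'\<^sup>* \<longleftrightarrow> (a,u) \<in> E\<^sup>*"
proof
  assume "m \<le> 1" "(Inl a, Inr m) \<in> E'\<^sup>*"
  then show "(a,u) \<in> E\<^sup>*" using fm_rt by (fastforce simp: fm_def)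
next
  assume m: "m \<le> 1" and "(a,u) \<in> E\<^sup>*"
  then have "(Inl a, Inl u) \<in> E'\<^sup>*" using lift by blast
  then have "(Inl a, Inr 0) \<in> E'\<^sup>*" by (simp add: rtrancl.rtrancl_into_rtrancl)
  then show "(Inl a, Inr m) \<in> E'\<^sup>*" using m
    by (cases m) (auto intro: rtrancl.rtrancl_into_rtrancl)
qed


lemma anc_v_u: "ancestors N v = {a. (R,a) \<in> E\<^sup>* \<and> (a,u) \<in> E\<^sup>*}"
proof (rule set_eqI, rule iffI)
  fix a assume a: "a \<in> ancestors N v"
  then have "(a,v) \<in> E\<^sup>+" by (rule anc_trancl)
  then obtain c where c: "(a,c) \<in> E\<^sup>*" "(c,v) \<in> E" by (meson tranclD2)
  then have "c = u" using uparent[OF indv] uvE by blast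
  then show "a \<in> {a. (R,a) \<in> E\<^sup>* \<and> (a,u) \<in> E\<^sup>*}" using a c by (auto simp: anc_iff)
next
  fix a assume a: "a \<in> {a. (R,a) \<in> E\<^sup>* \<and> (a,u) \<in> E\<^sup>*}"
  then have "a \<noteq> v" using vu_not by auto
  moreover have "(a,v) \<in> E\<^sup>*" using a uvE by (auto intro: rtrancl_into_rtrancl)
  ultimately show "a \<in> ancestors N v" using a by (auto simp: anc_iff)
qed

lemma anc'_L: "ancestors N' (Inl w) = Inl ` ancestors N w \<union> (if (v,w) \<in> E\<^sup>* then {Inr 0, Inr 1} else {})"
proof (rule set_eqI)
  fix x show "x \<in> ancestors N' (Inl w) \<longleftrightarrow> x \<in> Inl ` ancestors N w \<union> (if (v,w) \<in> E\<^sup>* then {Inr 0, Inr 1} else {})"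
  proof (cases x)
    case (Inl a)
    then show ?thesis by (auto simp: ancestors_def reach' reachLL)
  next
    case (Inr m)
    show ?thesis
    proof (cases "m \<le> 1")
      case True
      have "(Inl R, Inr m) \<in> E'\<^sup>*" using True reach0 reach1 by (cases m) auto
      then show ?thesis using Inr True R01[OF True, of w] by (auto simp: ancestors_def)
    next
      case False
      have "(Inr m, Inl w) \<notin> E'\<^sup>*" using high[of m "Inl w"] False by auto
      then show ?thesis using Inr False by (auto simp: ancestors_def)
    qed
  qed
qed

lemma anc'_0: "ancestors N' (Inr 0) = Inl ` ancestors N v"
proof (rule set_eqI)
  fix x show "x \<in> ancestors N' (Inr 0) \<longleftrightarrow> x \<in> Inl ` ancestors N v"
  proof (cases x)
    case (Inl a)
    have 1: "Inl a \<in> ancestors N' (Inr 0) \<longleftrightarrow> (R,a) \<in> E\<^sup>* \<and> (a,u) \<in> E\<^sup>*"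
      using L01[of 0 a] by (simp add: ancestors_def reach')
    have 2: "Inl a \<in> Inl ` ancestors N v \<longleftrightarrow> a \<in> ancestors N v" by auto
    have 3: "a \<in> ancestors N v \<longleftrightarrow> (R,a) \<in> E\<^sup>* \<and> (a,u) \<in> E\<^sup>*" using anc_v_u by simp
    show ?thesis by (simp only: Inl 1 2 3)
  next
    case (Inr m)
    have "x \<notin> ancestors N' (Inr 0)"
    proof (cases "m \<le> 1")
      case True
      then show ?thesis using Inr no_back by (cases m) (auto simp: ancestors_def)
    next
      case False
      then show ?thesis using Inr high[of m "Inr 0"] by (auto simp: ancestors_def)
    qed
    then show ?thesis using Inr by auto
  qed
qed

lemma anc'_1: "ancestors N' (Inr 1) = insert (Inr 0) (Inl ` ancestors N v)"
proof (rule set_eqI)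
  fix x show "x \<in> ancestors N' (Inr 1) \<longleftrightarrow> x \<in> insert (Inr 0) (Inl ` ancestors N v)"
  proof (cases x)
    case (Inl a)
    have 1: "Inl a \<in> ancestors N' (Inr 1) \<longleftrightarrow> (R,a) \<in> E\<^sup>* \<and> (a,u) \<in> E\<^sup>*"
      using L01[of 1 a] by (simp add: ancestors_def reach')
    have 2: "Inl a \<in> insert (Inr 0) (Inl ` ancestors N v) \<longleftrightarrow> a \<in> ancestors N v" by auto
    have 3: "a \<in> ancestors N v \<longleftrightarrow> (R,a) \<in> E\<^sup>* \<and> (a,u) \<in> E\<^sup>*" using anc_v_u by simp
    show ?thesis by (simp only: Inl 1 2 3)
  next
    case (Inr m)
    show ?thesis
    proof (cases "m = 0")
      case True
      then show ?thesis using Inr reach0 by (auto simp: ancestors_def r_into_rtrancl)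
    next
      case False
      have "x \<notin> ancestors N' (Inr 1)"
      proof (cases "m = 1")
        case True
        then show ?thesis using Inr by (auto simp: ancestors_def)
      next
        case m: False
        then show ?thesis using Inr False high[of m "Inr 1"] by (auto simp: ancestors_def)
      qed
      then show ?thesis using Inr False by auto
    qed
  qed
qed


lemma card_Inl: "card (Inl ` A :: ('v + nat) set) = card A"
  by (simp add: card_image)

lemma in'_L: "{x. (x, Inl w) \<in> E'} = (if w = v then {Inr 1} else Inl ` {a. (a,w) \<in> E})"
proof (rule set_eqI)
  fix x show "x \<in> {x. (x, Inl w) \<in> E'} \<longleftrightarrow> x \<in> (if w = v then {Inr 1} else Inl ` {a. (a,w) \<in> E})"
    using uparent[OF indv] uvE by (cases x) auto
qed
lemma out'_L: "{y. (Inl w, y) \<in> E'} = (if w = u then insert (Inr 0) (Inl ` ({b. (u,b) \<in> E} - {v})) else Inl ` {b. (w,b) \<in> E})"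
proof (rule set_eqI)
  fix x show "x \<in> {y. (Inl w, y) \<in> E'} \<longleftrightarrow> x \<in> (if w = u then insert (Inr 0) (Inl ` ({b. (u,b) \<in> E} - {v})) else Inl ` {b. (w,b) \<in> E})"
    by (cases x) auto
qed
lemma indeg'_L[simp]: "indeg N' (Inl w) = indeg N w"
proof (cases "w = v")
  case True
  then show ?thesis using indv unfolding indeg_def in'_L by simp
next
  case False
  then show ?thesis unfolding indeg_def in'_L by (simp add: card_Inl)
qed
lemma outdeg'_L[simp]: "outdeg N' (Inl w) = outdeg N w"
proof (cases "w = u")
  case True
  have f: "finite ({b. (u,b) \<in> E} - {v})" using fin_out by simp
  have "(Inr 0 :: 'v + nat) \<notin> Inl ` ({b. (u,b) \<in> E} - {v})" by auto
  then have "card {y. (Inl w, y) \<in> E'} = Suc (card ({b. (u,b) \<in> E} - {v}))"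
  proof -
    have c1: "card (Inl ` ({b. (u,b) \<in> E} - {v}) :: ('v + nat) set) = card ({b. (u,b) \<in> E} - {v})"
      by (rule card_image) simp
    show ?thesis
      unfolding out'_L using True card_insert_disjoint[OF finite_imageI[OF f] \<open>Inr 0 \<notin> _\<close>] c1 by simp
  qed
  also have "\<dots> = card {b. (u,b) \<in> E}"
  proof -
    have "card {b. (u,b) \<in> E} > 0" using fin_out[of u] uvE card_gt_0_iff by blast
    then show ?thesis using fin_out uvE by (simp add: card_Diff_singleton)
  qed
  finally show ?thesis using True by (simp add: outdeg_def)
next
  case False
  then show ?thesis unfolding outdeg_def out'_L by (simp add: card_Inl)
qed
lemma in'_R: "{x. (x, Inr m) \<in> E'} = (if m = 0 then {Inl u} else if m = 1 then {Inr 0} else if m = 2 then {Inr 0, Inr 1} else if m = 3 then {Inr 2} else {})"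
proof (rule set_eqI)
  fix x show "x \<in> {x. (x, Inr m) \<in> E'} \<longleftrightarrow> x \<in> (if m = 0 then {Inl u} else if m = 1 then {Inr 0} else if m = 2 then {Inr 0, Inr 1} else if m = 3 then {Inr 2} else {})"
    by (cases x) auto
qed
lemma out'_R: "{y. (Inr m, y) \<in> E'} = (if m = 0 then {Inr 1, Inr 2} else if m = 1 then {Inl v, Inr 2} else if m = 2 then {Inr 3} else {})"
proof (rule set_eqI)
  fix x show "x \<in> {y. (Inr m, y) \<in> E'} \<longleftrightarrow> x \<in> (if m = 0 then {Inr 1, Inr 2} else if m = 1 then {Inl v, Inr 2} else if m = 2 then {Inr 3} else {})"
    by (cases x) auto
qed
lemma indeg'_R[simp]: "indeg N' (Inr m) = (if m = 2 then 2 else if m \<le> 3 then 1 else 0)"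
  unfolding indeg_def in'_R by auto
lemma outdeg'_R[simp]: "outdeg N' (Inr m) = (if m \<le> 1 then 2 else if m = 2 then 1 else 0)"
  unfolding outdeg_def out'_R by auto

lemma tree'_L[simp]: "is_tree_node N' (Inl w) \<longleftrightarrow> is_tree_node N w" by (simp add: is_tree_node_def)
lemma leaf'_L[simp]: "is_leaf N' (Inl w) \<longleftrightarrow> is_leaf N w" by (simp add: is_leaf_def)
lemma ret'_L[simp]: "is_ret N' (Inl w) \<longleftrightarrow> is_ret N w" by (simp add: is_ret_def)
lemma tree'_R[simp]: "is_tree_node N' (Inr m) \<longleftrightarrow> m \<le> 1" by (auto simp: is_tree_node_def)
lemma leaf'_R[simp]: "is_leaf N' (Inr m) \<longleftrightarrow> m = 3" by (auto simp: is_leaf_def)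
lemma ret'_R[simp]: "is_ret N' (Inr m) \<longleftrightarrow> m = 2" by (auto simp: is_ret_def)


lemma noret_iff: "(\<forall>r. is_ret N' r \<longrightarrow> r \<notin> ancestors N' x) \<longleftrightarrow>
   (\<forall>r. is_ret N r \<longrightarrow> Inl r \<notin> ancestors N' x) \<and> Inr 2 \<notin> ancestors N' x"
  by (metis ret'_L ret'_R sum.exhaust)

lemma vT_noret: "is_ret N r \<Longrightarrow> r \<notin> ancestors N v" using vT by (auto simp: top_comp_def)

lemma T': "top_comp N' = Inl ` T \<union> {Inr 0, Inr 1}"
proof (rule set_eqI)
  fix x show "x \<in> top_comp N' \<longleftrightarrow> x \<in> Inl ` T \<union> {Inr 0, Inr 1}"
  proof (cases x)
    case (Inl w)
    have "x \<in> top_comp N' \<longleftrightarrow> (is_tree_node N w \<or> is_leaf N w) \<and> (\<forall>r. is_ret N r \<longrightarrow> Inl r \<notin> ancestors N' x) \<and> Inr 2 \<notin> ancestors N' x"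
      unfolding top_comp_def noret_iff using Inl by simp
    also have "\<dots> \<longleftrightarrow> w \<in> T" using Inl by (auto simp: anc'_L top_comp_def)
    finally show ?thesis using Inl by auto
  next
    case (Inr m)
    show ?thesis
    proof (cases "m \<le> 1")
      case True
      have m01: "m = 0 \<or> m = 1" using True by auto
      have "x \<in> top_comp N'"
        using m01 proof
        assume "m = 0" then show ?thesis unfolding top_comp_def noret_iff using Inr vT_noret
          by (auto simp: anc'_0)
      next
        assume "m = 1" then have x1: "x = Inr 1" using Inr by simp
        have "\<forall>r. is_ret N' r \<longrightarrow> r \<notin> ancestors N' (Inr 1)"
          unfolding noret_iff anc'_1 using vT_noret by auto
        then show ?thesis unfolding x1 top_comp_def by simp
      qed
      then show ?thesis using Inr m01 by auto
    next
      case False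
      have "x \<notin> top_comp N'"
      proof (cases "m = 3")
        case True
        have "(Inl R, Inr 2) \<in> E'\<^sup>*" using reach0 by (simp add: rtrancl.rtrancl_into_rtrancl)
        then have "Inr 2 \<in> ancestors N' (Inr 3)" by (auto simp: ancestors_def r_into_rtrancl)
        moreover have "is_ret N' (Inr 2)" by simp
        ultimately show ?thesis using Inr True unfolding top_comp_def by blast
      next
        case False
        then show ?thesis using Inr \<open>\<not> m \<le> 1\<close> by (auto simp: top_comp_def)
      qed
      then show ?thesis using Inr False by auto
    qed
  qed
qed

lemma alpha'_L: "alpha N' (Inl w) = alpha N w + (if (v,w) \<in> E\<^sup>* then 2 else 0)"
proof -
  have "finite (Inl ` ancestors N w :: ('v + nat) set)" using fin_anc by simp
  moreover have "Inr 0 \<notin> (Inl ` ancestors N w :: ('v + nat) set)" "Inr 1 \<notin> (Inl ` ancestors N w :: ('v + nat) set)" by auto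
  ultimately show ?thesis unfolding alpha_def anc'_L by (simp add: card_Inl)
qed
lemma alpha'_0: "alpha N' (Inr 0) = alpha N v"
  unfolding alpha_def anc'_0 by (simp add: card_Inl)
lemma alpha'_1: "alpha N' (Inr 1) = alpha N v + 1"
proof -
  have "finite (Inl ` ancestors N v :: ('v + nat) set)" using fin_anc by simp
  moreover have "(Inr 0 :: 'v + nat) \<notin> Inl ` ancestors N v" by auto
  ultimately show ?thesis unfolding alpha_def anc'_1 by (simp add: card_Inl)
qed

lemma A_C': "A_C N' = A_C N + 2 * card {w \<in> T. (v,w) \<in> E\<^sup>*} + 2 * alpha N v + 1"
proof -
  have fI: "finite (Inl ` T :: ('v + nat) set)" using finT by simp
  have "A_C N' = (\<Sum>x \<in> insert (Inr 0) (insert (Inr 1) (Inl ` T)). alpha N' x)"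
    unfolding A_C_def T' by (simp add: insert_commute)
  also have "\<dots> = alpha N' (Inr 0) + alpha N' (Inr 1) + (\<Sum>x \<in> Inl ` T. alpha N' x)"
  proof -
    have "(Inr 0 :: 'v + nat) \<notin> insert (Inr 1) (Inl ` T)" "(Inr 1 :: 'v + nat) \<notin> Inl ` T" by auto
    then show ?thesis using fI by simp
  qed
  also have "(\<Sum>x \<in> Inl ` T. alpha N' x) = (\<Sum>w \<in> T. alpha N' (Inl w))"
    by (simp add: sum.reindex)
  also have "\<dots> = (\<Sum>w \<in> T. alpha N w + (if (v,w) \<in> E\<^sup>* then 2 else 0))"
    by (simp add: alpha'_L)
  also have "\<dots> = A_C N + (\<Sum>w \<in> T. if (v,w) \<in> E\<^sup>* then 2 else 0)"
    by (simp add: sum.distrib A_C_def)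
  also have "(\<Sum>w \<in> T. if (v,w) \<in> E\<^sup>* then 2 else 0) = (\<Sum>w \<in> {w \<in> T. (v,w) \<in> E\<^sup>*}. (2::nat))"
    using sum.inter_filter[OF finT, of "\<lambda>_. 2::nat" "\<lambda>w. (v,w) \<in> E\<^sup>*"] by simp
  finally show ?thesis using alpha'_0 alpha'_1 by simp
qed

end

lemma (in onet) main_loc:
  "(\<Sum>e \<in> ToT N. A_C (add_ret N n e)) =
     card T * (A_C N + 1) + 4 * A_C N"
proof -
  define G where "G v = A_C N + 2 * card {w \<in> T. (v,w) \<in> E\<^sup>*} + 2 * alpha N v + 1" for v
  have "(\<Sum>e \<in> ToT N. A_C (add_ret N n e)) = (\<Sum>e \<in> ToT N. G (snd e))"
  proof (rule sum.cong[OF refl])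
    fix e assume e: "e \<in> ToT N"
    obtain u v where e_eq: "e = (u,v)" by (cases e)
    interpret oedge N n u v by unfold_locales (use e e_eq in simp)
    show "A_C (add_ret N n e) = G (snd e)" unfolding e_eq using A_C' by (simp add: G_def)
  qed
  also have "\<dots> = (\<Sum>v \<in> T. G v)" by (rule sum.reindex_bij_betw[OF bij_ToT])
  also have "\<dots> = (\<Sum>v \<in> T. A_C N + 1) + 2 * (\<Sum>v \<in> T. card {w \<in> T. (v,w) \<in> E\<^sup>*}) + 2 * (\<Sum>v \<in> T. alpha N v)"
  proof -
    have "(\<Sum>v \<in> T. G v) = (\<Sum>v \<in> T. (A_C N + 1) + (2 * card {w \<in> T. (v,w) \<in> E\<^sup>*} + 2 * alpha N v))"
      by (rule sum.cong) (simp_all add: G_def)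
    also have "\<dots> = (\<Sum>v \<in> T. A_C N + 1) + ((\<Sum>v \<in> T. 2 * card {w \<in> T. (v,w) \<in> E\<^sup>*}) + (\<Sum>v \<in> T. 2 * alpha N v))"
      by (simp only: sum.distrib)
    finally show ?thesis by (simp only: sum_distrib_left[symmetric] add.assoc)
  qed
  also have "\<dots> = card T * (A_C N + 1) + 4 * A_C N"
    unfolding sum_desc by (simp add: A_C_def)
  finally show ?thesis .
qed

theorem mainTheorem6:
  fixes N :: "'v network" and k j n :: nat
  assumes "k \<ge> 1" and "n = k + j" and "N \<in> OC k j"
  shows "(\<Sum>e \<in> ToT N. A_C (add_ret N n e)) = (2 * n + 3) * A_C N + (2 * n - 1)"
proof -
  have net: "is_network N n" "simplex N" "card (rets N) = j"
    using assms by (auto simp: OC_def)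
  interpret onet N n using net by unfold_locales
  have cT: "card T = 2 * n - 1" by (rule card_T)
  have "Suc 0 \<le> n" using assms by simp
  then obtain m where m: "n = Suc m" by (metis Suc_le_D)
  have "(\<Sum>e \<in> ToT N. A_C (add_ret N n e)) = card T * (A_C N + 1) + 4 * A_C N" by (rule main_loc)
  then show ?thesis using cT m by (simp add: algebra_simps)
qed

end
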